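(* Let $x_0\in X$ and for $r\ge0$ let $P_r$ be the orthogonal projection of $\ell^2(X)$ onto $\ell^2(Q_r(x_0))=\{\psi\in\ell^2(X):\psi(x)=0\text{ for }x\notin Q_r(x_0)\}$. Let $e^{(r)}_1\le\dots\le e^{(r)}_{N_r}$ be the eigenvalues (with multiplicity) of $P_r\Delta P_r$ acting on the $N_r$-dimensional space $\ell^2(Q_r(x_0))$, and $\nu_r=\frac1{N_r}\sum_{s=1}^{N_r}\delta(e^{(r)}_s)$. Then $\nu_r$ converges weak-* as $r\to\infty$ to the measure $\mu=\sum_{r=0}^\infty(\frac1{N_r}-\frac1{N_{r+1}})\delta(\lambda_r)$.
   Context: $X$ is an infinite countable set, $\delta_x$ is the Kronecker delta at $x\in X$. $\mathbf n=(n_r)_{r\ge0}$ is a sequence of positive integers and $\mathbf P=(\mathcal P_r)_{r\ge0}$ a sequence of partitions of $X$ (elements of $\mathcal P_r$ are "clusters of rank $r$"). $(X,\mathbf P,\mathbf n)$ is a hierarchical structure if: (i) $n_0=1$ and every cluster in $\mathcal P_0$ is a singleton; (ii) for $r\ge1$ every cluster in $\mathcal P_r$ is a disjoint union of exactly $n_r$ clusters of $\mathcal P_{r-1}$; (iii) any two points $x,y\in X$ lie in a common cluster of some rank. Set $N_r=\prod_{s=0}^r n_s$, let $Q_r(x)$ be the unique rank-$r$ cluster containing $x$, and $d(x,y)=\min\{r: y\in Q_r(x)\}$. The averaging operators $E_r$ on $\ell^2(X)$ are $(E_r\psi)(x)=\frac1{N_r}\sum_{d(x,y)\le r}\psi(y)$.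 Let $(p_r)_{r\ge1}$ be positive numbers with $\sum_{r\ge1}p_r=1$, set $p_0=0$, $\lambda_r=\sum_{s=0}^r p_s$, and $\Delta=\sum_{r=0}^\infty p_rE_r$. $\delta(\lambda)$ denotes the Dirac mass at $\lambda$. *)

theory Defs
  imports "HOL-Analysis.Analysis" "HOL-Probability.Probability_Mass_Function"
    "HOL-Library.Disjoint_Sets" "Jordan_Normal_Form.Char_Poly"
begin

definition hierarchical :: "(nat \<Rightarrow> 'a set set) \<Rightarrow> (nat \<Rightarrow> nat) \<Rightarrow> bool" where
  "hierarchical P n \<longleftrightarrow>
     (\<forall>r. n r > 0) \<and>
     (\<forall>r. partition_on (UNIV :: 'a set) (P r)) \<and>
     n 0 = 1 \<and> (\<forall>C\<in>P 0. \<exists>x. C = {x}) \<and>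
     (\<forall>r\<ge>1. \<forall>C\<in>P r. \<exists>S. S \<subseteq> P (r - 1) \<and> finite S \<and> card S = n r \<and> C = \<Union>S) \<and>
     (\<forall>x y. \<exists>r. \<exists>C\<in>P r. x \<in> C \<and> y \<in> C)"

definition NN :: "(nat \<Rightarrow> nat) \<Rightarrow> nat \<Rightarrow> nat" where
  "NN n r = (\<Prod>s\<le>r. n s)"

definition cluster :: "(nat \<Rightarrow> 'a set set) \<Rightarrow> nat \<Rightarrow> 'a \<Rightarrow> 'a set" where
  "cluster P r x = (THE C. C \<in> P r \<and> x \<in> C)"

definition hdist :: "(nat \<Rightarrow> 'a set set) \<Rightarrow> 'a \<Rightarrow> 'a \<Rightarrow> nat" where
  "hdist P x y = (LEAST r. y \<in> cluster P r x)"

text \<open>Matrix kernel of the averaging operator E_r in the standard basis: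
  (E_r \<psi>)(x) = \<Sum>_y E_kernel r x y * \<psi>(y).\<close>
definition E_kernel :: "(nat \<Rightarrow> 'a set set) \<Rightarrow> (nat \<Rightarrow> nat) \<Rightarrow> nat \<Rightarrow> 'a \<Rightarrow> 'a \<Rightarrow> real" where
  "E_kernel P n r x y = (if hdist P x y \<le> r then 1 / real (NN n r) else 0)"

text \<open>p_0 = 0 by convention; p is used only for r \<ge> 1.\<close>
definition pp :: "(nat \<Rightarrow> real) \<Rightarrow> nat \<Rightarrow> real" where
  "pp p r = (if r = 0 then 0 else p r)"

text \<open>Matrix kernel of \<Delta> = \<Sum>_r p_r E_r, i.e. <\<delta>_x, \<Delta> \<delta>_y>.\<close>
definition Delta_kernel :: "(nat \<Rightarrow> 'a set set) \<Rightarrow> (nat \<Rightarrow> nat) \<Rightarrow> (nat \<Rightarrow> real) \<Rightarrow> 'a \<Rightarrow> 'a \<Rightarrow> real" where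
  "Delta_kernel P n p x y = (\<Sum>r. pp p r * E_kernel P n r x y)"

definition lam :: "(nat \<Rightarrow> real) \<Rightarrow> nat \<Rightarrow> real" where
  "lam p r = (\<Sum>s\<le>r. pp p s)"

text \<open>An enumeration of a finite set (the choice does not affect eigenvalues).\<close>
definition enum_set :: "'a set \<Rightarrow> 'a list" where
  "enum_set A = (SOME xs. distinct xs \<and> set xs = A)"

text \<open>Matrix of P_r \<Delta> P_r acting on l^2(Q_r(x0)), in the basis \<delta>_x, x \<in> Q_r(x0).\<close>
definition compressed_Delta :: "(nat \<Rightarrow> 'a set set) \<Rightarrow> (nat \<Rightarrow> nat) \<Rightarrow> (nat \<Rightarrow> real) \<Rightarrow> 'a \<Rightarrow> nat \<Rightarrow> real mat" where
  "compressed_Delta P n p x0 r =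
     (let xs = enum_set (cluster P r x0)
      in mat (length xs) (length xs) (\<lambda>(i, j). Delta_kernel P n p (xs ! i) (xs ! j)))"

definition eigvals :: "real mat \<Rightarrow> real multiset" where
  "eigvals A = proots (char_poly A)"

definition nu :: "(nat \<Rightarrow> 'a set set) \<Rightarrow> (nat \<Rightarrow> nat) \<Rightarrow> (nat \<Rightarrow> real) \<Rightarrow> 'a \<Rightarrow> nat \<Rightarrow> real measure" where
  "nu P n p x0 r = measure_pmf (pmf_of_multiset (eigvals (compressed_Delta P n p x0 r)))"

definition mu :: "(nat \<Rightarrow> nat) \<Rightarrow> (nat \<Rightarrow> real) \<Rightarrow> real measure" where
  "mu n p = measure_of UNIV (sets borel)
     (\<lambda>A. \<Sum>r. ennreal (1 / real (NN n r) - 1 / real (NN n (Suc r))) * indicator A (lam p r))"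

definition weak_star_conv :: "(nat \<Rightarrow> real measure) \<Rightarrow> real measure \<Rightarrow> bool" where
  "weak_star_conv M L \<longleftrightarrow>
     (\<forall>f :: real \<Rightarrow> real. continuous_on UNIV f \<longrightarrow> bounded (range f) \<longrightarrow>
        (\<lambda>r. integral\<^sup>L (M r) f) \<longlonglongrightarrow> integral\<^sup>L L f)"

end

theory Submission
  imports Defs "Jordan_Normal_Form.Schur_Decomposition"
begin

definition mtr :: "'a::comm_ring_1 mat \<Rightarrow> 'a" where
  "mtr A = (\<Sum>i<dim_row A. A $$ (i,i))"

lemma mtr_comm:
  fixes X Y :: "'a::comm_ring_1 mat"
  assumes "X \<in> carrier_mat n n" "Y \<in> carrier_mat n n"
  shows "mtr (X * Y) = mtr (Y * X)"
proof -
  have "mtr (X * Y) = (\<Sum>i<n. \<Sum>k<n. X $$ (i,k) * Y $$ (k,i))"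
    using assms by (simp add: mtr_def scalar_prod_def row_def col_def atLeast0LessThan)
  also have "\<dots> = (\<Sum>k<n. \<Sum>i<n. Y $$ (k,i) * X $$ (i,k))"
    by (subst sum.swap) (simp add: mult.commute)
  also have "\<dots> = mtr (Y * X)"
    using assms by (simp add: mtr_def scalar_prod_def row_def col_def atLeast0LessThan)
  finally show ?thesis .
qed

lemma upper_tri_mult_diag:
  fixes A B :: "'a::comm_ring_1 mat"
  assumes "A \<in> carrier_mat n n" "B \<in> carrier_mat n n" "upper_triangular A" "upper_triangular B" "i < n"
  shows "(A * B) $$ (i,i) = A $$ (i,i) * B $$ (i,i)"
proof -
  have "(A * B) $$ (i,i) = (\<Sum>k<n. A $$ (i,k) * B $$ (k,i))"
    using assms by (simp add: scalar_prod_def row_def col_def atLeast0LessThan)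
  also have "\<dots> = (\<Sum>k\<in>{i}. A $$ (i,k) * B $$ (k,i))"
  proof (rule sum.mono_neutral_right)
    show "\<forall>k\<in>{..<n} - {i}. A $$ (i, k) * B $$ (k, i) = 0"
    proof
      fix k assume k: "k \<in> {..<n} - {i}"
      show "A $$ (i, k) * B $$ (k, i) = 0"
      proof (cases "k < i")
        case True thus ?thesis using assms k unfolding upper_triangular_def by auto
      next
        case False hence "i < k" using k by auto
        thus ?thesis using assms k unfolding upper_triangular_def by auto
      qed
    qed
  qed (use assms in auto)
  finally show ?thesis by simp
qed

lemma idem_det_complex:
  fixes F :: "complex mat"
  assumes F: "F \<in> carrier_mat n n" and idem: "F * F = F"
  shows "\<exists>k. mtr F = of_nat k \<and> (\<forall>t. Determinant.det (1\<^sub>m n + t \<cdot>\<^sub>m F) = (1 + t) ^ k)"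
proof -
  obtain es where es: "char_poly F = (\<Prod>a\<leftarrow>es. [:- a, 1:])" "length es = n"
    using char_poly_factorized[OF F] by blast
  obtain B P Q where sch: "schur_decomposition F es = (B,P,Q)"
    by (cases "schur_decomposition F es") auto
  from schur_decomposition[OF F es(1) sch]
  have wit: "similar_mat_wit F B P Q" and ut: "upper_triangular B" by auto
  from wit F have car: "B \<in> carrier_mat n n" "P \<in> carrier_mat n n" "Q \<in> carrier_mat n n"
    and PQ: "P * Q = 1\<^sub>m n" and QP: "Q * P = 1\<^sub>m n" and FPBQ: "F = P * B * Q"
    unfolding similar_mat_wit_def Let_def by auto
  have BQF: "B = Q * F * P"
  proof -
    have "Q * F * P = Q * (P * B * Q) * P" using FPBQ by simp
    also have "\<dots> = (Q * P) * B * (Q * P)" using car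
      by (simp add: assoc_mult_mat[of _ n n _ n _ n])
    also have "\<dots> = B" using car QP by simp
    finally show ?thesis by simp
  qed
  have Bidem: "B * B = B"
  proof -
    have "B * B = (Q * F * P) * (Q * F * P)" using BQF by simp
    also have "\<dots> = Q * F * (P * Q) * F * P" using car F
      by (simp add: assoc_mult_mat[of _ n n _ n _ n])
    also have "\<dots> = Q * (F * F) * P" using car F PQ
      by (simp add: assoc_mult_mat[of _ n n _ n _ n])
    also have "\<dots> = B" using idem BQF by simp
    finally show ?thesis .
  qed
  have d01: "B $$ (i,i) = 0 \<or> B $$ (i,i) = 1" if "i < n" for i
  proof -
    have "B $$ (i,i) * B $$ (i,i) = B $$ (i,i)"
      using upper_tri_mult_diag[OF car(1) car(1) ut ut that] Bidem by simp
    thus ?thesis by (metis mult_cancel_right1 mult_eq_0_iff)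
  qed
  define K where "K = {i. i < n \<and> B $$ (i,i) = 1}"
  have finK: "finite K" unfolding K_def by auto
  have trF: "mtr F = mtr B"
  proof -
    have "mtr F = mtr (P * (B * Q))" using FPBQ car by (simp add: assoc_mult_mat[of _ n n _ n _ n])
    also have "\<dots> = mtr ((B * Q) * P)" by (rule mtr_comm[of _ n]) (use car in auto)
    also have "\<dots> = mtr B" using car QP by (simp add: assoc_mult_mat[of _ n n _ n _ n])
    finally show ?thesis .
  qed
  have "mtr B = (\<Sum>i<n. if i \<in> K then 1 else 0)"
    unfolding mtr_def using car d01 K_def by (intro sum.cong) auto
  also have "\<dots> = of_nat (card K)"
    using K_def by (simp add: sum.If_cases lessThan_def Collect_conj_eq[symmetric])
  finally have tr: "mtr F = of_nat (card K)" using trF by simp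
  have dt: "Determinant.det (1\<^sub>m n + t \<cdot>\<^sub>m F) = (1 + t) ^ card K" for t
  proof -
    have sim: "similar_mat (1\<^sub>m n + t \<cdot>\<^sub>m F) (1\<^sub>m n + t \<cdot>\<^sub>m B)"
    proof (rule similar_matI[of _ _ P Q n])
      show "1\<^sub>m n + t \<cdot>\<^sub>m F = P * (1\<^sub>m n + t \<cdot>\<^sub>m B) * Q"
      proof -
        have e1: "P * (1\<^sub>m n + t \<cdot>\<^sub>m B) = P + t \<cdot>\<^sub>m (P * B)"
        proof -
          have "P * (1\<^sub>m n + t \<cdot>\<^sub>m B) = P * 1\<^sub>m n + P * (t \<cdot>\<^sub>m B)"
            by (rule mult_add_distrib_mat) (use car in auto)
          also have "\<dots> = P + t \<cdot>\<^sub>m (P * B)"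
            using car by (simp add: right_mult_one_mat mult_smult_distrib[of P n n])
          finally show ?thesis .
        qed
        have e2: "(P + t \<cdot>\<^sub>m (P * B)) * Q = P * Q + t \<cdot>\<^sub>m (P * B * Q)"
        proof -
          have "(P + t \<cdot>\<^sub>m (P * B)) * Q = P * Q + (t \<cdot>\<^sub>m (P * B)) * Q"
            by (rule add_mult_distrib_mat) (use car in auto)
          also have "\<dots> = P * Q + t \<cdot>\<^sub>m (P * B * Q)"
            using car by (simp add: mult_smult_assoc_mat[of _ n n])
          finally show ?thesis .
        qed
        show ?thesis using e1 e2 PQ FPBQ by simp
      qed
    qed (use car PQ QP F in auto)
    have ut2: "upper_triangular (1\<^sub>m n + t \<cdot>\<^sub>m B)"
      using ut car unfolding upper_triangular_def by auto
    have "Determinant.det (1\<^sub>m n + t \<cdot>\<^sub>m F) = Determinant.det (1\<^sub>m n + t \<cdot>\<^sub>m B)"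
      by (rule det_similar[OF sim])
    also have "\<dots> = (\<Prod>i = 0..<n. 1 + t * B $$ (i,i))"
      using det_upper_triangular[OF ut2, of n] car by (simp add: prod_list_diag_prod)
    also have "\<dots> = (\<Prod>i = 0..<n. if i \<in> K then 1 + t else 1)"
      using d01 K_def by (intro prod.cong) auto
    also have "\<dots> = (1 + t) ^ card K"
      using K_def by (simp add: prod.If_cases atLeast0LessThan lessThan_def Collect_conj_eq[symmetric])
    finally show ?thesis .
  qed
  show ?thesis using tr dt by blast
qed


lemma idem_det_real:
  fixes F :: "real mat"
  assumes F: "F \<in> carrier_mat n n" and idem: "F * F = F"
  shows "mtr F = real (nat \<lfloor>mtr F\<rfloor>)"
    and "Determinant.det (1\<^sub>m n + t \<cdot>\<^sub>m F) = (1 + t) ^ nat \<lfloor>mtr F\<rfloor>"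
proof -
  define Fc where "Fc = (of_real_hom.mat_hom F :: complex mat)"
  have Fc: "Fc \<in> carrier_mat n n" using F unfolding Fc_def by auto
  have "Fc * Fc = Fc" unfolding Fc_def
    using of_real_hom.mat_hom_mult[OF F F, symmetric] idem by simp
  then obtain k where k: "mtr Fc = of_nat k"
    and d: "\<And>t. Determinant.det (1\<^sub>m n + t \<cdot>\<^sub>m Fc) = (1 + t) ^ k"
    using idem_det_complex[OF Fc] by blast
  have "mtr Fc = of_real (mtr F)"
    using F unfolding Fc_def mtr_def by simp
  hence trF: "mtr F = real k" using k
    by (metis of_real_eq_iff of_real_of_nat_eq)
  thus "mtr F = real (nat \<lfloor>mtr F\<rfloor>)" by simp
  have "of_real_hom.mat_hom (1\<^sub>m n + t \<cdot>\<^sub>m F) = 1\<^sub>m n + complex_of_real t \<cdot>\<^sub>m Fc"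
    unfolding Fc_def using F by (intro eq_matI) auto
  hence "complex_of_real (Determinant.det (1\<^sub>m n + t \<cdot>\<^sub>m F)) = (1 + complex_of_real t) ^ k"
    using d by (metis of_real_hom.hom_det)
  hence "Determinant.det (1\<^sub>m n + t \<cdot>\<^sub>m F) = (1 + t) ^ k"
    by (metis of_real_1 of_real_add of_real_eq_iff of_real_power)
  thus "Determinant.det (1\<^sub>m n + t \<cdot>\<^sub>m F) = (1 + t) ^ nat \<lfloor>mtr F\<rfloor>" using trF by simp
qed

primrec Gm :: "nat \<Rightarrow> (nat \<Rightarrow> real mat) \<Rightarrow> (nat \<Rightarrow> real) \<Rightarrow> nat \<Rightarrow> real mat" where
  "Gm n F c 0 = 1\<^sub>m n"
| "Gm n F c (Suc k) = Gm n F c k + c k \<cdot>\<^sub>m F k"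

locale orth_idem =
  fixes n :: nat and F :: "nat \<Rightarrow> real mat" and K :: nat
  assumes car: "\<And>u. u \<le> K \<Longrightarrow> F u \<in> carrier_mat n n"
    and idem: "\<And>u. u \<le> K \<Longrightarrow> F u * F u = F u"
    and orth: "\<And>u v. u \<le> K \<Longrightarrow> v \<le> K \<Longrightarrow> u \<noteq> v \<Longrightarrow> F u * F v = 0\<^sub>m n n"
begin

lemma Gm_car: "k \<le> Suc K \<Longrightarrow> Gm n F c k \<in> carrier_mat n n"
  by (induction k) (auto intro!: add_carrier_mat smult_carrier_mat car)

lemma Gm_mult: "k \<le> j \<Longrightarrow> j \<le> K \<Longrightarrow> Gm n F c k * F j = F j"
proof (induction k)
  case 0 thus ?case using left_mult_one_mat[OF car[of j]] by simp
next
  case (Suc k)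
  have "Gm n F c (Suc k) * F j = Gm n F c k * F j + (c k \<cdot>\<^sub>m F k) * F j"
    by (simp, rule add_mult_distrib_mat[of _ n n]) (use Suc Gm_car car in auto)
  also have "(c k \<cdot>\<^sub>m F k) * F j = c k \<cdot>\<^sub>m (F k * F j)"
    by (rule mult_smult_assoc_mat[of _ n n]) (use Suc car in auto)
  also have "F k * F j = 0\<^sub>m n n" using Suc orth by auto
  finally show ?case using Suc car by simp
qed

lemma Gm_step: "k \<le> K \<Longrightarrow> Gm n F c (Suc k) = Gm n F c k * (1\<^sub>m n + c k \<cdot>\<^sub>m F k)"
proof -
  assume k: "k \<le> K"
  have "Gm n F c k * (1\<^sub>m n + c k \<cdot>\<^sub>m F k) = Gm n F c k * 1\<^sub>m n + Gm n F c k * (c k \<cdot>\<^sub>m F k)"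
    by (rule mult_add_distrib_mat[of _ n n]) (use k Gm_car car in auto)
  also have "Gm n F c k * (c k \<cdot>\<^sub>m F k) = c k \<cdot>\<^sub>m (Gm n F c k * F k)"
    by (rule mult_smult_distrib[of _ n n]) (use k Gm_car car in auto)
  also have "Gm n F c k * F k = F k" using Gm_mult k by auto
  finally show ?thesis using k right_mult_one_mat[OF Gm_car[of k c]] by simp
qed

lemma Gm_det: "k \<le> Suc K \<Longrightarrow> Determinant.det (Gm n F c k) = (\<Prod>u<k. (1 + c u) ^ nat \<lfloor>mtr (F u)\<rfloor>)"
proof (induction k)
  case 0 thus ?case by simp
next
  case (Suc k)
  hence k: "k \<le> K" by simp
  have "Determinant.det (Gm n F c (Suc k)) = Determinant.det (Gm n F c k) * Determinant.det (1\<^sub>m n + c k \<cdot>\<^sub>m F k)"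
    using Gm_step[OF k] det_mult[OF Gm_car[of k c], of "1\<^sub>m n + c k \<cdot>\<^sub>m F k"] car[OF k] k by simp
  also have "Determinant.det (1\<^sub>m n + c k \<cdot>\<^sub>m F k) = (1 + c k) ^ nat \<lfloor>mtr (F k)\<rfloor>"
    by (rule idem_det_real(2)[OF car idem]) (use k in auto)
  finally show ?case using Suc by simp
qed

lemma Gm_entry: "k \<le> Suc K \<Longrightarrow> i < n \<Longrightarrow> j < n \<Longrightarrow>
   Gm n F c k $$ (i,j) = (if i = j then 1 else 0) + (\<Sum>u<k. c u * F u $$ (i,j))"
proof (induction k)
  case 0 thus ?case by simp
next
  case (Suc k)
  thus ?case using Gm_car[of k c] car[of k] by simp
qed

end

locale hier =
  fixes P :: "nat \<Rightarrow> 'a set set" and n :: "nat \<Rightarrow> nat"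
  assumes H: "hierarchical P n"
begin

lemma npos: "n r > 0" using H unfolding hierarchical_def by auto
lemma part: "partition_on UNIV (P r)" using H unfolding hierarchical_def by auto
lemma n0: "n 0 = 1" using H unfolding hierarchical_def by auto
lemma P0: "C \<in> P 0 \<Longrightarrow> \<exists>x. C = {x}" using H unfolding hierarchical_def by auto
lemma Psuc: "C \<in> P (Suc r) \<Longrightarrow> \<exists>S. S \<subseteq> P r \<and> finite S \<and> card S = n (Suc r) \<and> C = \<Union>S"
  using H unfolding hierarchical_def by (metis diff_Suc_1 le_add1 plus_1_eq_Suc)
lemma common: "\<exists>r. \<exists>C\<in>P r. x \<in> C \<and> y \<in> C" using H unfolding hierarchical_def by auto

lemma cl_ex: "\<exists>C. C \<in> P r \<and> x \<in> C"
proof -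
  have "x \<in> \<Union>(P r)" using partition_onD1[OF part[of r]] by simp
  thus ?thesis by blast
qed
lemma cl_uniq: "C' \<in> P r \<Longrightarrow> x \<in> C' \<Longrightarrow> C \<in> P r \<Longrightarrow> x \<in> C \<Longrightarrow> C' = C"
  using partition_onD2[OF part[of r]] unfolding disjoint_def by blast
lemma ex1_cl: "\<exists>!C. C \<in> P r \<and> x \<in> C"
  using cl_ex[of r x] cl_uniq[of _ r x] by blast

lemma cl_in: "cluster P r x \<in> P r" and cl_mem: "x \<in> cluster P r x"
  using theI'[OF ex1_cl[of r x]] unfolding cluster_def by auto

lemma cl_eq: "C \<in> P r \<Longrightarrow> x \<in> C \<Longrightarrow> cluster P r x = C"
  using ex1_cl[of r x] cl_in cl_mem by blast

lemma cl_same: "y \<in> cluster P r x \<Longrightarrow> cluster P r y = cluster P r x"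
  using cl_eq cl_in by blast

lemma cl_sym: "y \<in> cluster P r x \<longleftrightarrow> x \<in> cluster P r y"
  using cl_same cl_mem by metis

lemma cl_suc: "cluster P r x \<subseteq> cluster P (Suc r) x"
proof -
  obtain S where S: "S \<subseteq> P r" "cluster P (Suc r) x = \<Union>S"
    using Psuc[OF cl_in[of "Suc r" x]] by blast
  then obtain D where "D \<in> S" "x \<in> D" using cl_mem[of x "Suc r"] by auto
  hence "cluster P r x = D" using S cl_eq by blast
  thus ?thesis using S \<open>D \<in> S\<close> by auto
qed

lemma cl_mono: "s \<le> r \<Longrightarrow> cluster P s x \<subseteq> cluster P r x"
proof (induction r)
  case 0 thus ?case by simp
next
  case (Suc r)
  show ?case
  proof (cases "s \<le> r")
    case True thus ?thesis using Suc.IH cl_suc[of r x] by blast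
  next
    case False hence "s = Suc r" using Suc.prems by simp
    thus ?thesis by simp
  qed
qed

lemma cl0: "cluster P 0 x = {x}"
proof -
  obtain y where "cluster P 0 x = {y}" using P0[OF cl_in] by blast
  thus ?thesis using cl_mem[of x 0] by auto
qed

lemma NN_Suc: "NN n (Suc r) = NN n r * n (Suc r)"
  unfolding NN_def by simp

lemma NN_pos: "NN n r > 0"
  unfolding NN_def using npos by (simp add: prod_pos)

lemma NN0: "NN n 0 = 1" unfolding NN_def using n0 by simp

lemma NN_mono: "s \<le> r \<Longrightarrow> NN n s \<le> NN n r"
proof (induction r)
  case 0 thus ?case by simp
next
  case (Suc r)
  have "NN n r \<le> NN n (Suc r)" using NN_Suc npos[of "Suc r"] by simp
  show ?case
  proof (cases "s \<le> r")
    case True thus ?thesis using Suc.IH \<open>NN n r \<le> NN n (Suc r)\<close> by linarith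
  next
    case False hence "s = Suc r" using Suc.prems by simp
    thus ?thesis by simp
  qed
qed

lemma cl_card: "finite (cluster P r x) \<and> card (cluster P r x) = NN n r"
proof (induction r arbitrary: x)
  case 0 thus ?case using cl0 NN0 by simp
next
  case (Suc r)
  obtain S where S: "S \<subseteq> P r" "finite S" "card S = n (Suc r)" "cluster P (Suc r) x = \<Union>S"
    using Psuc[OF cl_in[of "Suc r" x]] by blast
  have D: "finite D \<and> card D = NN n r" if "D \<in> S" for D
  proof -
    have DP: "D \<in> P r" using S(1) that by blast
    have "D \<noteq> {}" using partition_onD3[OF part[of r]] DP by blast
    then obtain y where "y \<in> D" by blast
    hence "cluster P r y = D" using cl_eq[OF DP] by blast
    thus ?thesis using Suc.IH[of y] by simp
  qed
  have dis: "disjoint S" using partition_onD2[OF part[of r]] S(1) unfolding disjoint_def by blast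
  have "card (\<Union>S) = sum card S" by (rule card_Union_disjoint[OF dis]) (use D in blast)
  also have "\<dots> = sum (\<lambda>_. NN n r) S" using D by (intro sum.cong) auto
  also have "\<dots> = n (Suc r) * NN n r" using S(3) by simp
  finally have c: "card (cluster P (Suc r) x) = NN n (Suc r)" using S(4) NN_Suc[of r] by simp
  have "finite (\<Union>S)" using S(2) D by blast
  thus ?case using c S(4) by simp
qed

lemma cl_finite: "finite (cluster P r x)" using cl_card by blast
lemma cl_card': "card (cluster P r x) = NN n r" using cl_card by blast

lemma hdist_le: "hdist P x y \<le> r \<longleftrightarrow> y \<in> cluster P r x"
proof -
  obtain r0 C where "C \<in> P r0" "x \<in> C" "y \<in> C" using common[of x y] by blast
  hence ex: "y \<in> cluster P r0 x" using cl_eq by blast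
  show ?thesis
  proof
    assume "hdist P x y \<le> r"
    moreover have "y \<in> cluster P (hdist P x y) x"
      unfolding hdist_def by (rule LeastI[of _ r0]) (use ex in auto)
    ultimately show "y \<in> cluster P r x" using cl_mono by blast
  next
    assume "y \<in> cluster P r x"
    thus "hdist P x y \<le> r" unfolding hdist_def by (rule Least_le)
  qed
qed

lemma finite_in_cl: "finite S \<Longrightarrow> \<exists>r. S \<subseteq> cluster P r x"
proof (induction S rule: finite_induct)
  case empty thus ?case by auto
next
  case (insert y S)
  then obtain r where r: "S \<subseteq> cluster P r x" by blast
  obtain r0 C where "C \<in> P r0" "x \<in> C" "y \<in> C" using common[of x y] by blast
  hence y: "y \<in> cluster P r0 x" using cl_eq by blast
  have "insert y S \<subseteq> cluster P (max r r0) x"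
    using r y cl_mono[of r "max r r0" x] cl_mono[of r0 "max r r0" x] by auto
  thus ?case by blast
qed

lemma NN_unbounded:
  assumes inf: "infinite (UNIV :: 'a set)"
  shows "(\<lambda>r. 1 / real (NN n r)) \<longlonglongrightarrow> 0"
proof (rule LIMSEQ_I)
  fix e :: real assume e: "e > 0"
  obtain K :: nat where K: "K > 1 / e" using reals_Archimedean2 by blast
  obtain S :: "'a set" where S: "finite S" "card S = K" using infinite_arbitrarily_large[OF inf] by blast
  obtain x :: 'a where True by blast
  obtain r where r: "S \<subseteq> cluster P r x" using finite_in_cl[OF S(1)] by blast
  have "K \<le> NN n r" using card_mono[OF cl_finite r] S cl_card' by simp
  show "\<exists>no. \<forall>m\<ge>no. norm (1 / real (NN n m) - 0) < e"
  proof (intro exI allI impI)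
    fix m assume "r \<le> m"
    hence "K \<le> NN n m" using NN_mono \<open>K \<le> NN n r\<close> le_trans by blast
    hence "real K \<le> real (NN n m)" by simp
    hence "1 / e < real (NN n m)" using K by linarith
    hence "1 / real (NN n m) < e" using e NN_pos[of m]
      by (simp add: divide_less_eq mult.commute)
    thus "norm (1 / real (NN n m) - 0) < e" by simp
  qed
qed

end

locale hmat = hier P n for P :: "nat \<Rightarrow> 'a set set" and n :: "nat \<Rightarrow> nat" +
  fixes x0 :: 'a and R :: nat
begin

definition "Q = cluster P R x0"
definition "xs = enum_set Q"
definition "N = length xs"

lemma xs_prop: "distinct xs \<and> set xs = Q"
proof -
  have "\<exists>ys. distinct ys \<and> set ys = Q"
    using finite_distinct_list[OF cl_finite[of R x0]] unfolding Q_def by blast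
  thus ?thesis unfolding xs_def enum_set_def by (rule someI_ex)
qed

lemma xs_dist: "distinct xs" and xs_set: "set xs = Q" using xs_prop by auto

lemma N_eq: "N = NN n R"
  unfolding N_def using distinct_card[OF xs_dist] xs_set cl_card'[of R x0] Q_def by simp

lemma N_pos: "N > 0" using N_eq NN_pos by simp

lemma xs_in: "i < N \<Longrightarrow> xs ! i \<in> Q"
proof -
  assume "i < N"
  hence "xs ! i \<in> set xs" unfolding N_def by simp
  thus ?thesis using xs_set by simp
qed

lemma cl_iff: "y \<in> cluster P s x \<longleftrightarrow> cluster P s y = cluster P s x"
  using cl_same[of y s x] cl_mem[of y s] by auto

lemma cl_R: "i < N \<Longrightarrow> cluster P R (xs ! i) = Q"
  using xs_in[of i] cl_same[of "xs ! i" R x0] unfolding Q_def by simp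

lemma cl_sub_Q: "i < N \<Longrightarrow> s \<le> R \<Longrightarrow> cluster P s (xs ! i) \<subseteq> Q"
  using cl_R[of i] cl_mono[of s R "xs ! i"] by simp

lemma count_cl:
  assumes i: "i < N" and s: "s \<le> R"
  shows "card {k. k < N \<and> xs ! k \<in> cluster P s (xs ! i)} = NN n s"
proof -
  let ?C = "cluster P s (xs ! i)"
  let ?K = "{k. k < N \<and> xs ! k \<in> ?C}"
  have inj: "inj_on (nth xs) ?K"
    using inj_on_nth[OF xs_dist, of ?K] N_def by auto
  have img: "nth xs ` ?K = ?C"
  proof
    show "nth xs ` ?K \<subseteq> ?C" by auto
    show "?C \<subseteq> nth xs ` ?K"
    proof
      fix y assume y: "y \<in> ?C"
      hence "y \<in> set xs" using cl_sub_Q[OF i s] xs_set by auto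
      then obtain k where "k < N" "xs ! k = y" unfolding N_def by (auto simp: in_set_conv_nth)
      thus "y \<in> nth xs ` ?K" using y by auto
    qed
  qed
  have "card ?K = card ?C" using card_image[OF inj] img by simp
  thus ?thesis using cl_card' by simp
qed

definition e :: "nat \<Rightarrow> nat \<Rightarrow> nat \<Rightarrow> real" where
  "e s i j = (if xs ! j \<in> cluster P s (xs ! i) then 1 / real (NN n s) else 0)"

lemma row_sum:
  assumes i: "i < N" and s: "s \<le> R"
  shows "(\<Sum>k<N. e s i k) = 1"
proof -
  have "(\<Sum>k<N. e s i k) = (\<Sum>k\<in>{k\<in>{..<N}. xs ! k \<in> cluster P s (xs ! i)}. 1 / real (NN n s))"
    unfolding e_def by (rule sum.inter_filter[symmetric]) simp
  also have "{k\<in>{..<N}. xs ! k \<in> cluster P s (xs ! i)} = {k. k < N \<and> xs ! k \<in> cluster P s (xs ! i)}"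
    by auto
  also have "(\<Sum>k\<in>\<dots>. 1 / real (NN n s)) = 1"
    using count_cl[OF i s] NN_pos[of s] by simp
  finally show ?thesis .
qed

lemma e_sym: "e s i j = e s j i"
  unfolding e_def using cl_sym by simp

lemma col_sum:
  assumes j: "j < N" and s: "s \<le> R"
  shows "(\<Sum>k<N. e s k j) = 1"
  using row_sum[OF j s] e_sym by simp

lemma e_prod:
  assumes s: "s \<le> R" and t: "t \<le> R" and i: "i < N" and j: "j < N"
  shows "(\<Sum>k<N. e s i k * e t k j) = e (max s t) i j"
proof (cases "s \<le> t")
  case True
  have "(\<Sum>k<N. e s i k * e t k j) = (\<Sum>k<N. e s i k * e t i j)"
  proof (rule sum.cong[OF refl])
    fix k assume k: "k \<in> {..<N}"
    show "e s i k * e t k j = e s i k * e t i j"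
    proof (cases "xs ! k \<in> cluster P s (xs ! i)")
      case True
      hence "xs ! k \<in> cluster P t (xs ! i)" using cl_mono[OF \<open>s \<le> t\<close>] by blast
      hence "cluster P t (xs ! k) = cluster P t (xs ! i)" using cl_same by blast
      thus ?thesis unfolding e_def by simp
    next
      case False thus ?thesis unfolding e_def by simp
    qed
  qed
  also have "\<dots> = (\<Sum>k<N. e s i k) * e t i j" by (simp add: sum_distrib_right)
  also have "\<dots> = e t i j" using row_sum[OF i s] by simp
  finally show ?thesis using True by (simp add: max_def)
next
  case False
  hence ts: "t \<le> s" by simp
  have "(\<Sum>k<N. e s i k * e t k j) = (\<Sum>k<N. e s i j * e t k j)"
  proof (rule sum.cong[OF refl])
    fix k assume k: "k \<in> {..<N}"
    show "e s i k * e t k j = e s i j * e t k j"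
    proof (cases "xs ! j \<in> cluster P t (xs ! k)")
      case True
      hence "xs ! k \<in> cluster P t (xs ! j)" using cl_sym by blast
      hence "xs ! k \<in> cluster P s (xs ! j)" using cl_mono[OF ts] by blast
      hence eq: "cluster P s (xs ! k) = cluster P s (xs ! j)" using cl_same by blast
      have "xs ! k \<in> cluster P s (xs ! i) \<longleftrightarrow> xs ! j \<in> cluster P s (xs ! i)"
        using cl_iff[of "xs ! k" s "xs ! i"] cl_iff[of "xs ! j" s "xs ! i"] eq by simp
      thus ?thesis unfolding e_def by simp
    next
      case False thus ?thesis unfolding e_def by simp
    qed
  qed
  also have "\<dots> = e s i j * (\<Sum>k<N. e t k j)" by (simp add: sum_distrib_left)
  also have "\<dots> = e s i j" using col_sum[OF j t] by simp
  finally show ?thesis using ts by (simp add: max_def)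
qed

lemma e0: "i < N \<Longrightarrow> j < N \<Longrightarrow> e 0 i j = (if i = j then 1 else 0)"
  unfolding e_def using cl0 NN0 nth_eq_iff_index_eq[OF xs_dist] N_def by auto

lemma e_diag: "e s i i = 1 / real (NN n s)"
  unfolding e_def using cl_mem by simp

definition eR :: "nat \<Rightarrow> nat \<Rightarrow> nat \<Rightarrow> real" where
  "eR u i j = (if u \<le> R then e u i j else 0)"

lemma eR_prod:
  assumes i: "i < N" and j: "j < N"
  shows "(\<Sum>k<N. eR a i k * eR b k j) = (if a \<le> R \<and> b \<le> R then e (max a b) i j else 0)"
  using e_prod[OF _ _ i j, of a b] unfolding eR_def by auto

definition f :: "nat \<Rightarrow> nat \<Rightarrow> nat \<Rightarrow> real" where
  "f u i j = eR u i j - eR (Suc u) i j"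

definition Fm :: "nat \<Rightarrow> real mat" where
  "Fm u = mat N N (\<lambda>(i,j). f u i j)"

lemma Fm_car: "Fm u \<in> carrier_mat N N" unfolding Fm_def by simp

lemma f_prod:
  assumes i: "i < N" and j: "j < N" and u: "u \<le> R" and v: "v \<le> R"
  shows "(\<Sum>k<N. f u i k * f v k j) = (if u = v then f u i j else 0)"
proof -
  have "(\<Sum>k<N. f u i k * f v k j) =
     (\<Sum>k<N. eR u i k * eR v k j) - (\<Sum>k<N. eR u i k * eR (Suc v) k j)
     - (\<Sum>k<N. eR (Suc u) i k * eR v k j) + (\<Sum>k<N. eR (Suc u) i k * eR (Suc v) k j)"
    unfolding f_def by (simp add: algebra_simps sum.distrib sum_subtractf)
  also have "\<dots> = (if u = v then f u i j else 0)"
  proof (cases "u = v")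
    case True
    have m: "max u u = u" "max u (Suc u) = Suc u" "max (Suc u) u = Suc u" "max (Suc u) (Suc u) = Suc u"
      by auto
    show ?thesis unfolding eR_prod[OF i j] True[symmetric] m using u unfolding f_def eR_def by simp
  next
    case False
    show ?thesis
    proof (cases "u < v")
      case True
      have m: "max u v = v" "max u (Suc v) = Suc v" "max (Suc u) v = v" "max (Suc u) (Suc v) = Suc v"
        using True by auto
      show ?thesis unfolding eR_prod[OF i j] m using u v True False by simp
    next
      case F2: False
      hence vu: "v < u" using False by simp
      have m: "max u v = u" "max u (Suc v) = u" "max (Suc u) v = Suc u" "max (Suc u) (Suc v) = Suc u"
        using vu by auto
      show ?thesis unfolding eR_prod[OF i j] m using u v vu False by simp
    qed
  qed
  finally show ?thesis .
qed

lemma Fm_mult: "u \<le> R \<Longrightarrow> v \<le> R \<Longrightarrow> Fm u * Fm v = (if u = v then Fm u else 0\<^sub>m N N)"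
proof -
  assume uv: "u \<le> R" "v \<le> R"
  show ?thesis
  proof (rule eq_matI)
    fix i j assume ij: "i < dim_row (if u = v then Fm u else 0\<^sub>m N N)" "j < dim_col (if u = v then Fm u else 0\<^sub>m N N)"
    hence ij': "i < N" "j < N" by (cases "u = v"; simp add: Fm_def)+
    have "(Fm u * Fm v) $$ (i, j) = (\<Sum>k<N. f u i k * f v k j)"
      using ij' by (simp add: Fm_def scalar_prod_def row_def col_def atLeast0LessThan)
    also have "\<dots> = (if u = v then f u i j else 0)" by (rule f_prod[OF ij' uv])
    finally show "(Fm u * Fm v) $$ (i, j) = (if u = v then Fm u else 0\<^sub>m N N) $$ (i, j)"
      using ij' by (simp add: Fm_def)
  qed (auto simp: Fm_def)
qed

lemma orth: "orth_idem N Fm R"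
  by unfold_locales (auto simp: Fm_car Fm_mult)

lemma f_sum: "i < N \<Longrightarrow> j < N \<Longrightarrow> (\<Sum>u<Suc R. f u i j) = (if i = j then 1 else 0)"
proof -
  assume ij: "i < N" "j < N"
  have "(\<Sum>u<Suc R. f u i j) = eR 0 i j - eR (Suc R) i j"
    unfolding f_def by (rule sum_lessThan_telescope')
  thus ?thesis using e0[OF ij] unfolding eR_def by simp
qed

definition wR :: "nat \<Rightarrow> real" where
  "wR u = (if u \<le> R then 1 / real (NN n u) else 0)"

lemma mtr_Fm: "mtr (Fm u) = real N * (wR u - wR (Suc u))"
proof -
  have "mtr (Fm u) = (\<Sum>i<N. f u i i)" unfolding mtr_def Fm_def by simp
  also have "\<dots> = (\<Sum>i<N. wR u - wR (Suc u))"
    by (intro sum.cong) (auto simp: f_def eR_def wR_def e_diag)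
  finally show ?thesis by simp
qed

end

lemma abel_sum:
  fixes a g :: "nat \<Rightarrow> real"
  shows "(\<Sum>u<R. (\<Sum>s\<le>u. a s) * (g u - g (Suc u))) = (\<Sum>u<R. a u * g u) - ((\<Sum>s\<le>R. a s) - a R) * g R"
proof (induction R)
  case 0 thus ?case by simp
next
  case (Suc R)
  thus ?case by (simp add: algebra_simps)
qed

lemma pp_nonneg: "(\<And>r. r \<ge> 1 \<Longrightarrow> p r > 0) \<Longrightarrow> pp p r \<ge> 0"
  unfolding pp_def by (cases r) (auto intro: less_imp_le)

lemma pp_summable: "(\<lambda>r. p (Suc r)) sums 1 \<Longrightarrow> summable (pp p)"
proof -
  assume "(\<lambda>r. p (Suc r)) sums 1"
  hence "summable (\<lambda>r. pp p (Suc r))" unfolding pp_def by (simp add: sums_summable)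
  thus ?thesis by (simp add: summable_Suc_iff)
qed

locale hdelta = hmat P n x0 R for P :: "nat \<Rightarrow> 'a set set" and n x0 R +
  fixes p :: "nat \<Rightarrow> real"
  assumes ppos: "\<And>r. r \<ge> 1 \<Longrightarrow> p r > 0" and psum: "(\<lambda>r. p (Suc r)) sums 1"
begin

lemma ppn: "pp p r \<ge> 0" using pp_nonneg ppos by blast
lemma pps: "summable (pp p)" using pp_summable psum by blast

lemma Ek_bounds: "0 \<le> E_kernel P n r x y \<and> E_kernel P n r x y \<le> 1"
  unfolding E_kernel_def using NN_pos[of r] by auto

lemma ker_summable: "summable (\<lambda>r. pp p r * E_kernel P n r x y)"
proof (rule summable_comparison_test[OF _ pps])
  show "\<exists>N. \<forall>r\<ge>N. norm (pp p r * E_kernel P n r x y) \<le> pp p r"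
    using Ek_bounds ppn by (auto intro!: exI[of _ 0] mult_left_le simp: abs_mult)
qed

definition "T = (\<Sum>r. pp p (r + R) * (1 / real (NN n (r + R))))"

lemma Delta_entry:
  assumes i: "i < N" and j: "j < N"
  shows "Delta_kernel P n p (xs ! i) (xs ! j) = (\<Sum>u<R. pp p u * e u i j) + T"
proof -
  let ?g = "\<lambda>r. pp p r * E_kernel P n r (xs ! i) (xs ! j)"
  have "Delta_kernel P n p (xs ! i) (xs ! j) = (\<Sum>r. ?g (r + R)) + sum ?g {..<R}"
    unfolding Delta_kernel_def by (rule suminf_split_initial_segment[OF ker_summable])
  also have "(\<lambda>r. ?g (r + R)) = (\<lambda>r. pp p (r + R) * (1 / real (NN n (r + R))))"
  proof
    fix r
    have "xs ! j \<in> Q" using xs_in[OF j] .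
    hence "xs ! j \<in> cluster P R (xs ! i)" using cl_R[OF i] by simp
    hence "xs ! j \<in> cluster P (r + R) (xs ! i)" using cl_mono[of R "r + R"] by auto
    thus "?g (r + R) = pp p (r + R) * (1 / real (NN n (r + R)))"
      unfolding E_kernel_def using hdist_le by simp
  qed
  also have "sum ?g {..<R} = (\<Sum>u<R. pp p u * e u i j)"
    unfolding E_kernel_def e_def using hdist_le by (intro sum.cong) auto
  finally show ?thesis unfolding T_def by simp
qed

definition "muR = lam p R - pp p R + real N * T"
definition "muv u = (if u < R then lam p u else muR)"

lemma muv_f_sum:
  assumes i: "i < N" and j: "j < N"
  shows "(\<Sum>u<Suc R. muv u * f u i j) = Delta_kernel P n p (xs ! i) (xs ! j)"
proof -
  have s1: "(\<Sum>u<Suc R. muv u * f u i j) = (\<Sum>u<R. lam p u * (e u i j - e (Suc u) i j)) + muR * e R i j"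
    by (simp add: muv_def f_def eR_def)
  have s2: "(\<Sum>u<R. lam p u * (e u i j - e (Suc u) i j)) = (\<Sum>u<R. pp p u * e u i j) - (lam p R - pp p R) * e R i j"
    unfolding lam_def by (rule abel_sum)
  have s3: "e R i j = 1 / real N"
  proof -
    have "xs ! j \<in> cluster P R (xs ! i)" using xs_in[OF j] cl_R[OF i] by simp
    thus ?thesis unfolding e_def N_eq by simp
  qed
  have s4: "muR * (1 / real N) - (lam p R - pp p R) * (1 / real N) = T"
    unfolding muR_def using N_pos by (simp add: field_simps)
  have "(\<Sum>u<Suc R. muv u * f u i j) = (\<Sum>u<R. pp p u * e u i j) + (muR * e R i j - (lam p R - pp p R) * e R i j)"
    using s1 s2 by simp
  also have "\<dots> = (\<Sum>u<R. pp p u * e u i j) + T" using s3 s4 by simp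
  finally show ?thesis using Delta_entry[OF i j] by simp
qed

definition "A = compressed_Delta P n p x0 R"

lemma A_def': "A = mat N N (\<lambda>(i,j). Delta_kernel P n p (xs ! i) (xs ! j))"
  unfolding A_def compressed_Delta_def Let_def xs_def[symmetric] Q_def[symmetric] N_def ..

lemma A_car: "A \<in> carrier_mat N N" unfolding A_def' by simp

definition "kk u = nat \<lfloor>mtr (Fm u)\<rfloor>"

lemma det_char: "Determinant.det (- char_matrix A x) = (\<Prod>u<Suc R. (x - muv u) ^ kk u)"
proof -
  interpret oi: orth_idem N Fm R by (rule orth)
  define c where "c u = x - muv u - 1" for u
  have eq: "- char_matrix A x = Gm N Fm c (Suc R)"
  proof (rule eq_matI)
    fix i j assume ij: "i < dim_row (Gm N Fm c (Suc R))" "j < dim_col (Gm N Fm c (Suc R))"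
    hence ij': "i < N" "j < N" using oi.Gm_car[of "Suc R" c] by auto
    have "Gm N Fm c (Suc R) $$ (i,j) = (if i = j then 1 else 0) + (\<Sum>u<Suc R. c u * Fm u $$ (i,j))"
      by (rule oi.Gm_entry) (use ij' in auto)
    also have "(\<Sum>u<Suc R. c u * Fm u $$ (i,j)) = (\<Sum>u<Suc R. (x - 1) * f u i j - muv u * f u i j)"
      using ij' by (intro sum.cong) (auto simp: c_def Fm_def algebra_simps)
    also have "\<dots> = (x - 1) * (\<Sum>u<Suc R. f u i j) - (\<Sum>u<Suc R. muv u * f u i j)"
      by (simp only: sum_subtractf sum_distrib_left)
    also have "\<dots> = (x - 1) * (if i = j then 1 else 0) - Delta_kernel P n p (xs ! i) (xs ! j)"
      using f_sum[OF ij'] muv_f_sum[OF ij'] by simp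
    finally show "(- char_matrix A x) $$ (i,j) = Gm N Fm c (Suc R) $$ (i,j)"
      using ij' A_car unfolding char_matrix_def by (simp add: A_def')
  qed (use A_car oi.Gm_car[of "Suc R" c] in \<open>auto simp: char_matrix_def\<close>)
  have "Determinant.det (Gm N Fm c (Suc R)) = (\<Prod>u<Suc R. (1 + c u) ^ nat \<lfloor>mtr (Fm u)\<rfloor>)"
    by (rule oi.Gm_det) simp
  thus ?thesis using eq unfolding kk_def c_def by simp
qed

lemma char_poly_A: "char_poly A = (\<Prod>u<Suc R. [:- muv u, 1:] ^ kk u)"
proof -
  have "poly (char_poly A) = poly (\<Prod>u<Suc R. [:- muv u, 1:] ^ kk u)"
  proof
    fix x
    show "poly (char_poly A) x = poly (\<Prod>u<Suc R. [:- muv u, 1:] ^ kk u) x"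
      unfolding char_poly_matrix[OF A_car] det_char poly_prod poly_power by simp
  qed
  thus ?thesis by (simp add: poly_eq_poly_eq_iff)
qed

lemma eigvals_A: "eigvals A = (\<Sum>u<Suc R. repeat_mset (kk u) {#muv u#})"
proof -
  have "eigvals A = (\<Sum>u<Suc R. proots ([:- muv u, 1:] ^ kk u))"
    unfolding eigvals_def char_poly_A by (rule proots_prod) simp
  also have "\<dots> = (\<Sum>u<Suc R. repeat_mset (kk u) {#muv u#})"
    using proots_linear_factor[of "- muv _"] by (simp add: proots_power)
  finally show ?thesis .
qed

lemma kk_real: "real (kk u) = real N * (wR u - wR (Suc u))"
proof -
  interpret oi: orth_idem N Fm R by (rule orth)
  show ?thesis
  proof (cases "u \<le> R")
    case True
    have "mtr (Fm u) = real (nat \<lfloor>mtr (Fm u)\<rfloor>)"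
      by (rule idem_det_real(1)[OF oi.car oi.idem]) (use True in auto)
    thus ?thesis using mtr_Fm[of u] unfolding kk_def by simp
  next
    case False thus ?thesis unfolding kk_def mtr_Fm wR_def by simp
  qed
qed

end

context hdelta
begin

lemma wR0: "wR 0 = 1" unfolding wR_def using NN0 by simp

lemma sum_kk: "(\<Sum>u<Suc R. real (kk u)) = real N"
proof -
  have "(\<Sum>u<Suc R. real (kk u)) = real N * (\<Sum>u<Suc R. wR u - wR (Suc u))"
    unfolding kk_real by (simp only: sum_distrib_left)
  also have "(\<Sum>u<Suc R. wR u - wR (Suc u)) = wR 0 - wR (Suc R)" by (rule sum_lessThan_telescope')
  finally show ?thesis using wR0 unfolding wR_def by simp
qed

lemma nu_integral:
  fixes g :: "real \<Rightarrow> real"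
  shows "integral\<^sup>L (nu P n p x0 R) g = (\<Sum>u<Suc R. (wR u - wR (Suc u)) * g (muv u))"
proof -
  define M where "M = eigvals A"
  have M: "M = (\<Sum>u<Suc R. repeat_mset (kk u) {#muv u#})" unfolding M_def by (rule eigvals_A)
  have sz: "size M = (\<Sum>u<Suc R. kk u)" unfolding M by (simp add: size_multiset_sum)
  have szr: "real (size M) = real N" using sz sum_kk by (metis of_nat_sum)
  hence "size M > 0" using N_pos by simp
  hence Mne: "M \<noteq> {#}" by auto
  define S where "S = muv ` {..<Suc R}"
  have setM: "set_mset M \<subseteq> S"
    unfolding M S_def by (auto simp: set_mset_sum split: if_splits)
  have cnt: "count M a = (\<Sum>u<Suc R. if a = muv u then kk u else 0)" for a
    unfolding M by (simp add: count_sum)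
  have "integral\<^sup>L (nu P n p x0 R) g = (\<Sum>a\<in>S. g a * pmf (pmf_of_multiset M) a)"
    unfolding nu_def M_def[symmetric] A_def[symmetric]
    by (rule integral_measure_pmf_real) (use setM Mne S_def in auto)
  also have "\<dots> = (\<Sum>a\<in>S. g a * real (count M a)) / real N"
    using Mne szr by (simp add: sum_divide_distrib)
  also have "(\<Sum>a\<in>S. g a * real (count M a)) = (\<Sum>a\<in>S. g a * (\<Sum>u<Suc R. if a = muv u then real (kk u) else 0))"
  proof (rule sum.cong[OF refl])
    fix a
    have "real (count M a) = (\<Sum>u<Suc R. if a = muv u then real (kk u) else 0)"
      unfolding cnt of_nat_sum by (rule sum.cong) auto
    thus "g a * real (count M a) = g a * (\<Sum>u<Suc R. if a = muv u then real (kk u) else 0)" by simp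
  qed
  also have "(\<Sum>a\<in>S. g a * (\<Sum>u<Suc R. if a = muv u then real (kk u) else 0))
      = (\<Sum>u<Suc R. \<Sum>a\<in>S. if a = muv u then real (kk u) * g a else 0)"
  proof -
    have "(\<Sum>a\<in>S. g a * (\<Sum>u<Suc R. if a = muv u then real (kk u) else 0))
        = (\<Sum>a\<in>S. \<Sum>u<Suc R. if a = muv u then real (kk u) * g a else 0)"
      by (intro sum.cong refl, simp only: sum_distrib_left, intro sum.cong refl, simp)
    also have "\<dots> = (\<Sum>u<Suc R. \<Sum>a\<in>S. if a = muv u then real (kk u) * g a else 0)"
      by (rule sum.swap)
    finally show ?thesis .
  qed
  also have "\<dots> = (\<Sum>u<Suc R. real (kk u) * g (muv u))"
    by (intro sum.cong refl) (simp add: S_def sum.delta)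
  also have "\<dots> / real N = (\<Sum>u<Suc R. (wR u - wR (Suc u)) * g (muv u))"
  proof -
    have "(\<Sum>u<Suc R. real (kk u) * g (muv u)) = real N * (\<Sum>u<Suc R. (wR u - wR (Suc u)) * g (muv u))"
      unfolding kk_real sum_distrib_left by (simp only: mult.assoc)
    thus ?thesis using N_pos by simp
  qed
  finally show ?thesis .
qed

lemma nu_integral':
  fixes g :: "real \<Rightarrow> real"
  shows "integral\<^sup>L (nu P n p x0 R) g =
    (\<Sum>u<R. (1 / real (NN n u) - 1 / real (NN n (Suc u))) * g (lam p u)) + g muR / real (NN n R)"
proof -
  have "integral\<^sup>L (nu P n p x0 R) g = (\<Sum>u<R. (wR u - wR (Suc u)) * g (muv u)) + (wR R - wR (Suc R)) * g (muv R)"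
    using nu_integral by simp
  also have "(\<Sum>u<R. (wR u - wR (Suc u)) * g (muv u)) = (\<Sum>u<R. (1 / real (NN n u) - 1 / real (NN n (Suc u))) * g (lam p u))"
    by (intro sum.cong) (auto simp: wR_def muv_def)
  finally show ?thesis by (simp add: wR_def muv_def)
qed

end

lemma nu_formula:
  assumes H: "hierarchical P n" and pp: "\<And>r. r \<ge> 1 \<Longrightarrow> p r > 0" and ps: "(\<lambda>r. p (Suc r)) sums 1"
  shows "\<exists>m. integral\<^sup>L (nu P n p x0 R) g =
    (\<Sum>u<R. (1 / real (NN n u) - 1 / real (NN n (Suc u))) * g (lam p u)) + g m / real (NN n R)"
proof -
  interpret hd: hdelta P n x0 R p by unfold_locales (use H pp ps in auto)
  show ?thesis using hd.nu_integral' by blast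
qed

definition wt :: "(nat \<Rightarrow> nat) \<Rightarrow> nat \<Rightarrow> real" where
  "wt n r = 1 / real (NN n r) - 1 / real (NN n (Suc r))"

lemma (in hier) wt_nonneg: "wt n r \<ge> 0"
proof -
  have "NN n r \<le> NN n (Suc r)" by (rule NN_mono) simp
  thus ?thesis unfolding wt_def using NN_pos[of r] by (simp add: frac_le)
qed

lemma (in hier) wt_sums:
  assumes inf: "infinite (UNIV :: 'a set)"
  shows "wt n sums 1"
proof -
  have "(\<lambda>r. 1 / real (NN n (Suc r)) - 1 / real (NN n r)) sums (0 - 1 / real (NN n 0))"
    by (rule telescope_sums[OF NN_unbounded[OF inf]])
  hence "(\<lambda>r. - (1 / real (NN n (Suc r)) - 1 / real (NN n r))) sums (- (0 - 1 / real (NN n 0)))"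
    by (rule sums_minus)
  thus ?thesis unfolding wt_def using NN0 by simp
qed

lemma (in hier) mu_eq:
  "mu n p = distr (density (count_space UNIV) (\<lambda>r. ennreal (wt n r))) borel (lam p)"
proof -
  let ?W = "density (count_space UNIV) (\<lambda>r. ennreal (wt n r))"
  let ?M = "distr ?W borel (lam p)"
  have meas: "lam p \<in> ?W \<rightarrow>\<^sub>M borel"
    by (simp add: measurable_cong_sets[OF sets_density refl])
  have "mu n p = measure_of UNIV (sets borel) (emeasure ?M)"
    unfolding mu_def
  proof (rule measure_of_eq)
    show "sets (borel :: real measure) \<subseteq> Pow UNIV" by simp
    fix a :: "real set" assume "a \<in> sigma_sets UNIV (sets borel)"
    hence a: "a \<in> sets (borel :: real measure)" using sets.sigma_sets_eq[of borel] space_borel by metis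
    have "emeasure ?M a = emeasure ?W (lam p -` a \<inter> space ?W)"
      by (rule emeasure_distr[OF meas a])
    also have "\<dots> = (\<integral>\<^sup>+ r. ennreal (wt n r) * indicator (lam p -` a) r \<partial>count_space UNIV)"
      by (subst emeasure_density) (auto simp: nn_integral_count_space_indicator mult.commute)
    also have "\<dots> = (\<Sum>r. ennreal (wt n r) * indicator (lam p -` a) r)"
      by (rule nn_integral_count_space_nat)
    finally show "(\<Sum>r. ennreal (1 / real (NN n r) - 1 / real (NN n (Suc r))) * indicator a (lam p r)) = emeasure ?M a"
      unfolding wt_def by (simp add: indicator_def)
  qed
  also have "\<dots> = ?M"
    using measure_of_of_measure[of ?M] by simp
  finally show ?thesis .
qed

lemma (in hier) mu_integral:
  assumes inf: "infinite (UNIV :: 'a set)"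
    and g: "g \<in> borel_measurable borel" and B: "\<And>x. \<bar>g x\<bar> \<le> B"
  shows "(\<lambda>r. wt n r * g (lam p r)) sums integral\<^sup>L (mu n p) g"
proof -
  let ?W = "density (count_space UNIV) (\<lambda>r. ennreal (wt n r))"
  have meas: "lam p \<in> ?W \<rightarrow>\<^sub>M borel"
    by (simp add: measurable_cong_sets[OF sets_density refl])
  have "integral\<^sup>L (mu n p) g = integral\<^sup>L ?W (\<lambda>r. g (lam p r))"
    unfolding mu_eq by (rule integral_distr[OF meas g])
  also have "\<dots> = integral\<^sup>L (count_space UNIV) (\<lambda>r. wt n r *\<^sub>R g (lam p r))"
    by (rule integral_density) (auto simp: wt_nonneg)
  finally have eq: "integral\<^sup>L (mu n p) g = integral\<^sup>L (count_space UNIV) (\<lambda>r. wt n r * g (lam p r))" by simp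
  have "summable (\<lambda>r. norm (wt n r * g (lam p r)))"
  proof (rule summable_comparison_test[of _ "\<lambda>r. B * wt n r"])
    show "\<exists>N. \<forall>r\<ge>N. norm (norm (wt n r * g (lam p r))) \<le> B * wt n r"
    proof (intro exI[of _ 0] allI impI)
      fix r :: nat
      have "wt n r * \<bar>g (lam p r)\<bar> \<le> wt n r * B" using B wt_nonneg by (intro mult_left_mono) auto
      thus "norm (norm (wt n r * g (lam p r))) \<le> B * wt n r" using wt_nonneg[of r] by (simp add: abs_mult mult.commute)
    qed
    show "summable (\<lambda>r. B * wt n r)"
      using wt_sums[OF inf] by (intro summable_mult) (simp add: sums_summable)
  qed
  hence "integrable (count_space UNIV) (\<lambda>r. wt n r * g (lam p r))"
    by (simp add: integrable_count_space_nat_iff)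
  thus ?thesis unfolding eq by (rule sums_integral_count_space_nat)
qed

theorem proposition2:
  fixes P :: "nat \<Rightarrow> 'a :: countable set set" and n :: "nat \<Rightarrow> nat"
    and p :: "nat \<Rightarrow> real" and x0 :: 'a
  assumes "infinite (UNIV :: 'a set)"
    and "hierarchical P n"
    and "\<And>r. r \<ge> 1 \<Longrightarrow> p r > 0"
    and "(\<lambda>r. p (Suc r)) sums 1"
  shows "weak_star_conv (nu P n p x0) (mu n p)"
  unfolding weak_star_conv_def
proof (intro allI impI)
  interpret hier P n by unfold_locales (rule assms(2))
  fix g :: "real \<Rightarrow> real"
  assume cont: "continuous_on UNIV g" and bnd: "bounded (range g)"
  obtain B where B0: "\<forall>y\<in>range g. norm y \<le> B"
    using bnd unfolding bounded_iff by blast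
  have B: "\<bar>g x\<bar> \<le> B" for x using B0 by simp
  have gm: "g \<in> borel_measurable borel" using cont by (rule borel_measurable_continuous_onI)
  define S where "S R = (\<Sum>u<R. wt n u * g (lam p u))" for R
  have S: "S \<longlonglongrightarrow> integral\<^sup>L (mu n p) g"
    using mu_integral[OF assms(1) gm B] unfolding S_def sums_def .
  define d where "d R = integral\<^sup>L (nu P n p x0 R) g - S R" for R
  have dbound: "norm (d R) \<le> B * (1 / real (NN n R))" for R
  proof -
    obtain m where m: "integral\<^sup>L (nu P n p x0 R) g =
      (\<Sum>u<R. (1 / real (NN n u) - 1 / real (NN n (Suc u))) * g (lam p u)) + g m / real (NN n R)"
      using nu_formula[OF assms(2-4)] by blast
    hence "d R = g m / real (NN n R)" unfolding d_def S_def wt_def by simp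
    hence "norm (d R) = \<bar>g m\<bar> * (1 / real (NN n R))" by (simp add: abs_div)
    also have "\<dots> \<le> B * (1 / real (NN n R))" using B[of m] NN_pos[of R]
      by (intro mult_right_mono) auto
    finally show ?thesis .
  qed
  have "(\<lambda>R. B * (1 / real (NN n R))) \<longlonglongrightarrow> B * 0"
    by (intro tendsto_mult tendsto_const NN_unbounded[OF assms(1)])
  hence lim0: "(\<lambda>R. B * (1 / real (NN n R))) \<longlonglongrightarrow> 0" by simp
  have ev: "\<forall>\<^sub>F R in sequentially. norm (d R) \<le> B * (1 / real (NN n R))"
    using dbound by (intro always_eventually allI)
  have d0: "d \<longlonglongrightarrow> 0" by (rule Lim_null_comparison[OF ev lim0])
  have "(\<lambda>R. S R + d R) \<longlonglongrightarrow> integral\<^sup>L (mu n p) g + 0"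
    by (intro tendsto_add S d0)
  thus "(\<lambda>R. integral\<^sup>L (nu P n p x0 R) g) \<longlonglongrightarrow> integral\<^sup>L (mu n p) g"
    unfolding d_def by simp
qed

end
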